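(* Let $Q$ be a finite quiver. Every unital semisimple subalgebra of the path algebra $\Bbbk Q$ is isomorphic to $\Bbbk^n$ for some $n$.
   Context: $\Bbbk$ is an algebraically closed field of characteristic zero. $\Bbbk Q$ has as basis all paths in $Q$ of length $\ge0$, with multiplication by concatenation (zero if not composable); its unit is the sum of the vertex idempotents. A unital subalgebra contains the unit $1$ of $\Bbbk Q$. *)

theory Defs
  imports "HOL-Computational_Algebra.Polynomial"
begin

definition alg_closed :: "('k::field) itself \<Rightarrow> bool" where
  "alg_closed _ \<longleftrightarrow> (\<forall>p::'k poly. degree p > 0 \<longrightarrow> (\<exists>x. poly p x = 0))"

text \<open>A path is a pair (v, as): a start vertex v and a list of arrows as (length 0 gives the trivial path e_v).\<close>

type_synonym ('v,'e) qpath = "'v \<times> 'e list"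

fun arrows_chain :: "('e \<Rightarrow> 'v) \<Rightarrow> ('e \<Rightarrow> 'v) \<Rightarrow> 'v \<Rightarrow> 'e list \<Rightarrow> bool" where
  "arrows_chain src tgt v [] = True"
| "arrows_chain src tgt v (a # as) = (src a = v \<and> arrows_chain src tgt (tgt a) as)"

definition valid_path :: "('e \<Rightarrow> 'v) \<Rightarrow> ('e \<Rightarrow> 'v) \<Rightarrow> ('v,'e) qpath \<Rightarrow> bool" where
  "valid_path src tgt p \<longleftrightarrow> arrows_chain src tgt (fst p) (snd p)"

definition path_vertex :: "('e \<Rightarrow> 'v) \<Rightarrow> ('v,'e) qpath \<Rightarrow> nat \<Rightarrow> 'v" where
  "path_vertex tgt p k = (if k = 0 then fst p else tgt (snd p ! (k - 1)))"

definition path_alg :: "('e \<Rightarrow> 'v) \<Rightarrow> ('e \<Rightarrow> 'v) \<Rightarrow> (('v,'e) qpath \<Rightarrow> 'k::field) set" where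
  "path_alg src tgt = {f. finite {p. f p \<noteq> 0} \<and> (\<forall>p. f p \<noteq> 0 \<longrightarrow> valid_path src tgt p)}"

definition pa_mult :: "('e \<Rightarrow> 'v) \<Rightarrow> ('e \<Rightarrow> 'v) \<Rightarrow> (('v,'e) qpath \<Rightarrow> 'k::field)
    \<Rightarrow> (('v,'e) qpath \<Rightarrow> 'k) \<Rightarrow> ('v,'e) qpath \<Rightarrow> 'k" where
  "pa_mult src tgt f g p =
     (if valid_path src tgt p then
        (\<Sum>k\<le>length (snd p). f (fst p, take k (snd p)) * g (path_vertex tgt p k, drop k (snd p)))
      else 0)"

definition pa_one :: "('v,'e) qpath \<Rightarrow> 'k::field" where
  "pa_one p = (if snd p = [] then 1 else 0)"

definition pa_add :: "('p \<Rightarrow> 'k::field) \<Rightarrow> ('p \<Rightarrow> 'k) \<Rightarrow> 'p \<Rightarrow> 'k" where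
  "pa_add f g = (\<lambda>p. f p + g p)"

definition pa_smult :: "'k::field \<Rightarrow> ('p \<Rightarrow> 'k) \<Rightarrow> 'p \<Rightarrow> 'k" where
  "pa_smult c f = (\<lambda>p. c * f p)"

definition pa_neg :: "('p \<Rightarrow> 'k::field) \<Rightarrow> 'p \<Rightarrow> 'k" where
  "pa_neg f = (\<lambda>p. - f p)"

definition unital_subalgebra :: "('e \<Rightarrow> 'v) \<Rightarrow> ('e \<Rightarrow> 'v) \<Rightarrow> (('v,'e) qpath \<Rightarrow> 'k::field) set \<Rightarrow> bool" where
  "unital_subalgebra src tgt A \<longleftrightarrow>
     A \<subseteq> path_alg src tgt \<and> (\<lambda>_. 0) \<in> A \<and> pa_one \<in> A \<and>
     (\<forall>x\<in>A. \<forall>y\<in>A. pa_add x y \<in> A) \<and>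
     (\<forall>c. \<forall>x\<in>A. pa_smult c x \<in> A) \<and>
     (\<forall>x\<in>A. \<forall>y\<in>A. pa_mult src tgt x y \<in> A)"

definition left_ideal_in :: "('e \<Rightarrow> 'v) \<Rightarrow> ('e \<Rightarrow> 'v) \<Rightarrow> (('v,'e) qpath \<Rightarrow> 'k::field) set
    \<Rightarrow> (('v,'e) qpath \<Rightarrow> 'k) set \<Rightarrow> bool" where
  "left_ideal_in src tgt A L \<longleftrightarrow>
     L \<subseteq> A \<and> (\<lambda>_. 0) \<in> L \<and>
     (\<forall>x\<in>L. \<forall>y\<in>L. pa_add x y \<in> L) \<and> (\<forall>x\<in>L. pa_neg x \<in> L) \<and>
     (\<forall>a\<in>A. \<forall>x\<in>L. pa_mult src tgt a x \<in> L)"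

definition semisimple_subalg :: "('e \<Rightarrow> 'v) \<Rightarrow> ('e \<Rightarrow> 'v) \<Rightarrow> (('v,'e) qpath \<Rightarrow> 'k::field) set \<Rightarrow> bool" where
  "semisimple_subalg src tgt A \<longleftrightarrow>
     (\<forall>L. left_ideal_in src tgt A L \<longrightarrow>
        (\<exists>L'. left_ideal_in src tgt A L' \<and> L \<inter> L' = {\<lambda>_. 0} \<and>
              {pa_add x y | x y. x \<in> L \<and> y \<in> L'} = A))"

text \<open>A is isomorphic (as a unital k-algebra) to k^n, modelled as functions nat \<Rightarrow> k vanishing
  outside {..<n} with componentwise operations.\<close>
definition iso_to_kn :: "('e \<Rightarrow> 'v) \<Rightarrow> ('e \<Rightarrow> 'v) \<Rightarrow> (('v,'e) qpath \<Rightarrow> 'k::field) set \<Rightarrow> nat \<Rightarrow> bool" where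
  "iso_to_kn src tgt A n \<longleftrightarrow>
     (\<exists>\<phi> :: (('v,'e) qpath \<Rightarrow> 'k) \<Rightarrow> nat \<Rightarrow> 'k.
        bij_betw \<phi> A {u. \<forall>i\<ge>n. u i = 0} \<and>
        (\<forall>x\<in>A. \<forall>y\<in>A. \<phi> (pa_add x y) = (\<lambda>i. \<phi> x i + \<phi> y i)) \<and>
        (\<forall>c. \<forall>x\<in>A. \<phi> (pa_smult c x) = (\<lambda>i. c * \<phi> x i)) \<and>
        (\<forall>x\<in>A. \<forall>y\<in>A. \<phi> (pa_mult src tgt x y) = (\<lambda>i. \<phi> x i * \<phi> y i)) \<and>
        \<phi> pa_one = (\<lambda>i. if i < n then 1 else 0))"

end

theory Submission
  imports Defs
begin

lemma pm_triv: "pa_mult src tgt a x (v,[]) = a (v,[]) * x (v,[])"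
  by (simp add: pa_mult_def valid_path_def path_vertex_def)

lemma pm_distrib:
  "pa_mult src tgt x (pa_add e f) = pa_add (pa_mult src tgt x e) (pa_mult src tgt x f)"
  by (auto simp: pa_mult_def pa_add_def fun_eq_iff distrib_left sum.distrib)

lemma pm_one:
  assumes "x \<in> path_alg src tgt"
  shows "pa_mult src tgt x pa_one = x"
proof
  fix p :: "('a,'b) qpath"
  obtain v s where p: "p = (v,s)" by (cases p)
  show "pa_mult src tgt x pa_one p = x p"
  proof (cases "valid_path src tgt p")
    case True
    have "(\<Sum>k\<le>length s. x (v, take k s) * pa_one (path_vertex tgt p k, drop k s))
        = (\<Sum>k\<le>length s. if k = length s then x p else 0)"
      by (rule sum.cong) (auto simp: pa_one_def p)
    also have "\<dots> = x p" by simp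
    finally show ?thesis using True by (simp add: pa_mult_def p)
  next
    case False
    have "\<forall>p. x p \<noteq> 0 \<longrightarrow> valid_path src tgt p" using assms unfolding path_alg_def by blast
    then have "x p = 0" using False by blast
    then show ?thesis using False by (simp add: pa_mult_def)
  qed
qed

lemma kernel_zero:
  fixes A :: "(('v,'e) qpath \<Rightarrow> 'k::field) set"
  assumes US: "unital_subalgebra src tgt A" and SS: "semisimple_subalg src tgt A"
    and xA: "x \<in> A" and x0: "\<forall>v. x (v,[]) = 0"
  shows "x = (\<lambda>_. 0)"
proof -
  define K where "K = {a\<in>A. \<forall>v. a (v,[]) = 0}"
  have negeq: "pa_neg a = pa_smult (-1) a" for a :: "('v,'e) qpath \<Rightarrow> 'k::field"
    by (simp add: fun_eq_iff pa_neg_def pa_smult_def)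
  have negA: "\<forall>a\<in>A. pa_neg a \<in> A"
    using US unfolding unital_subalgebra_def unfolding negeq by blast
  have LK: "left_ideal_in src tgt A K"
    using US negA unfolding left_ideal_in_def unital_subalgebra_def K_def
    by (auto simp: pa_neg_def pa_add_def pa_smult_def pm_triv)
  obtain L' where L': "left_ideal_in src tgt A L'" and KL: "K \<inter> L' = {\<lambda>_. 0}"
    and sumA: "{pa_add x y | x y. x \<in> K \<and> y \<in> L'} = A"
    using SS[unfolded semisimple_subalg_def, rule_format, OF LK]
    by (atomize_elim, assumption)
  have "pa_one \<in> A" using US unfolding unital_subalgebra_def by blast
  then have "pa_one \<in> {pa_add x y | x y. x \<in> K \<and> y \<in> L'}" by (simp only: sumA)
  then obtain e f where eK: "e \<in> K" and fL: "f \<in> L'" and one: "pa_one = pa_add e f"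
    by blast
  have xK: "x \<in> K" using xA x0 K_def by auto
  have xP: "x \<in> path_alg src tgt" using US xA unfolding unital_subalgebra_def by blast
  have 1: "x = pa_add (pa_mult src tgt x e) (pa_mult src tgt x f)"
  proof -
    have "x = pa_mult src tgt x pa_one" using pm_one[OF xP] by simp
    also have "\<dots> = pa_mult src tgt x (pa_add e f)" using one by simp
    finally show ?thesis by (simp only: pm_distrib)
  qed
  have xe: "pa_mult src tgt x e \<in> K" using LK xA eK unfolding left_ideal_in_def by blast
  have xf: "pa_mult src tgt x f \<in> L'" using L' xA fL unfolding left_ideal_in_def by blast
  have "pa_mult src tgt x f = pa_add x (pa_neg (pa_mult src tgt x e))"
  proof
    fix p
    have "x p = pa_mult src tgt x e p + pa_mult src tgt x f p"
      using fun_cong[OF 1, of p] by (simp add: pa_add_def)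
    then show "pa_mult src tgt x f p = pa_add x (pa_neg (pa_mult src tgt x e)) p"
      by (simp add: pa_add_def pa_neg_def)
  qed
  then have "pa_mult src tgt x f \<in> K" using LK xK xe unfolding left_ideal_in_def by simp
  then have "pa_mult src tgt x f = (\<lambda>_. 0)" using xf KL by blast
  then have xxe: "x = pa_mult src tgt x e" using 1 by (simp add: fun_eq_iff pa_add_def)
  have e0: "e (v,[]) = 0" for v using eK K_def by auto
  have "x p = 0" for p
  proof (induct "length (snd p)" arbitrary: p rule: less_induct)
    case less
    obtain v s where p: "p = (v,s)" by (cases p)
    have "(\<Sum>k\<le>length s. x (v, take k s) * e (path_vertex tgt p k, drop k s)) = 0"
    proof (rule sum.neutral, intro ballI)
      fix k assume k: "k \<in> {..length s}"
      show "x (v, take k s) * e (path_vertex tgt p k, drop k s) = 0"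
      proof (cases "k < length s")
        case True
        then show ?thesis using less[of "(v, take k s)"] p by simp
      next
        case False
        then have "drop k s = []" by simp
        then show ?thesis using e0 by simp
      qed
    qed
    then have "pa_mult src tgt x e p = 0" by (simp add: pa_mult_def p)
    then show ?case using xxe by metis
  qed
  then show ?thesis by auto
qed

lemma indicator_ex:
  fixes A :: "(('v::finite,'e) qpath \<Rightarrow> 'k::field) set"
  assumes US: "unital_subalgebra src tgt A"
  defines "rel \<equiv> \<lambda>v w. \<forall>a\<in>A. a (v,[]) = a (w,[])"
  shows "\<exists>E\<in>A. \<forall>v. E (v,[]) = (if rel v r then 1 else 0)"
proof -
  have oneA: "pa_one \<in> A" and addA: "\<forall>x\<in>A. \<forall>y\<in>A. pa_add x y \<in> A"
    and smA: "\<forall>c. \<forall>x\<in>A. pa_smult c x \<in> A"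
    and mulA: "\<forall>x\<in>A. \<forall>y\<in>A. pa_mult src tgt x y \<in> A"
    using US unfolding unital_subalgebra_def by auto
  have "finite S \<Longrightarrow> \<exists>a\<in>A. (\<forall>v. rel v r \<longrightarrow> a (v,[]) = 1) \<and> (\<forall>w\<in>S. \<not> rel w r \<longrightarrow> a (w,[]) = 0)"
    for S :: "'v set"
  proof (induct S rule: finite_induct)
    case empty
    show ?case using oneA by (intro bexI[of _ pa_one]) (auto simp: pa_one_def)
  next
    case (insert w S)
    then obtain a where aA: "a \<in> A" and a1: "\<forall>v. rel v r \<longrightarrow> a (v,[]) = 1"
      and a0: "\<forall>w\<in>S. \<not> rel w r \<longrightarrow> a (w,[]) = 0" by blast
    show ?case
    proof (cases "rel w r")
      case True
      then show ?thesis using aA a1 a0 by blast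
    next
      case False
      then obtain b where bA: "b \<in> A" and bne: "b (w,[]) \<noteq> b (r,[])"
        unfolding rel_def by blast
      define c where "c = pa_smult (1 / (b (r,[]) - b (w,[])))
          (pa_add b (pa_smult (- b (w,[])) pa_one))"
      have cA: "c \<in> A" unfolding c_def using smA addA oneA bA by blast
      have cv: "c (v,[]) = (b (v,[]) - b (w,[])) / (b (r,[]) - b (w,[]))" for v
        by (simp add: c_def pa_smult_def pa_add_def pa_one_def divide_simps)
      have c1: "rel v r \<Longrightarrow> c (v,[]) = 1" for v
        using cv[of v] bA bne unfolding rel_def by auto
      have c0: "c (w,[]) = 0" using cv[of w] by simp
      show ?thesis
      proof (intro bexI[of _ "pa_mult src tgt c a"] conjI allI ballI impI)
        show "pa_mult src tgt c a \<in> A" using mulA cA aA by blast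
        fix v assume "rel v r"
        then show "pa_mult src tgt c a (v,[]) = 1" using c1 a1 by (simp add: pm_triv)
      next
        fix u assume "u \<in> insert w S" "\<not> rel u r"
        then show "pa_mult src tgt c a (u,[]) = 0" using c0 a0 by (auto simp: pm_triv)
      qed
    qed
  qed
  from this[of UNIV] obtain a where "a \<in> A" "\<forall>v. rel v r \<longrightarrow> a (v,[]) = 1"
    "\<forall>w. \<not> rel w r \<longrightarrow> a (w,[]) = 0" by auto
  then show ?thesis by (intro bexI[of _ a]) auto
qed

theorem mainTheorem13:
  fixes src tgt :: "'e::finite \<Rightarrow> 'v::finite"
    and A :: "(('v,'e) qpath \<Rightarrow> 'k::field_char_0) set"
  assumes "alg_closed TYPE('k)"
    and US: "unital_subalgebra src tgt A"
    and SS: "semisimple_subalg src tgt A"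
  shows "\<exists>n. iso_to_kn src tgt A n"
proof -
  have zA: "(\<lambda>_. 0) \<in> A" and oneA: "pa_one \<in> A" and addA: "\<forall>x\<in>A. \<forall>y\<in>A. pa_add x y \<in> A"
    and smA: "\<forall>c. \<forall>x\<in>A. pa_smult c x \<in> A"
    and mulA: "\<forall>x\<in>A. \<forall>y\<in>A. pa_mult src tgt x y \<in> A"
    using US unfolding unital_subalgebra_def by auto
  define rel where "rel = (\<lambda>v w. \<forall>a\<in>A. a (v,[]) = a (w,[]))"
  define rep where "rep v = (SOME w. rel w v)" for v
  have relrep: "rel (rep v) v" for v
    unfolding rep_def by (rule someI[of _ v]) (simp add: rel_def)
  have rep_eq: "rel v w \<Longrightarrow> rep v = rep w" for v w
  proof -
    assume "rel v w"
    then have "(\<lambda>w'. rel w' v) = (\<lambda>w'. rel w' w)" by (auto simp: rel_def fun_eq_iff)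
    then show ?thesis unfolding rep_def by simp
  qed
  have reprep: "rep (rep v) = rep v" for v using rep_eq[OF relrep] .
  define R where "R = range rep"
  define n where "n = card R"
  have "finite R" unfolding R_def by simp
  then obtain h where hb: "bij_betw h {0..<n} R" unfolding n_def
    using ex_bij_betw_nat_finite by blast
  have dist: "i < n \<Longrightarrow> j < n \<Longrightarrow> rel (h i) (h j) \<Longrightarrow> i = j" for i j
  proof -
    assume ij: "i < n" "j < n" "rel (h i) (h j)"
    have hR: "h i \<in> R" "h j \<in> R" using hb ij unfolding bij_betw_def by auto
    have e1: "rep (h i) = h i"
    proof -
      obtain v where "h i = rep v" using hR(1) unfolding R_def by blast
      then show ?thesis using reprep by simp
    qed
    have e2: "rep (h j) = h j"
    proof -
      obtain v where "h j = rep v" using hR(2) unfolding R_def by blast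
      then show ?thesis using reprep by simp
    qed
    have "h i = h j" by (rule trans[OF e1[symmetric] trans[OF rep_eq[OF ij(3)] e2]])
    moreover have "inj_on h {0..<n}" using hb unfolding bij_betw_def by blast
    ultimately show "i = j" using ij(1,2) unfolding inj_on_def by simp
  qed
  have kern: "x \<in> A \<Longrightarrow> \<forall>i<n. x (h i, []) = 0 \<Longrightarrow> x = (\<lambda>_. 0)" for x
  proof -
    assume xA: "x \<in> A" and x0: "\<forall>i<n. x (h i, []) = 0"
    have "x (v,[]) = 0" for v
    proof -
      have "rep v \<in> R" unfolding R_def by simp
      then obtain i where "i < n" "rep v = h i" using hb unfolding bij_betw_def by auto
      then have "x (rep v, []) = 0" using x0 by simp
      then show ?thesis using relrep[of v] xA unfolding rel_def by metis
    qed
    then show ?thesis using kernel_zero[OF US SS xA] by blast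
  qed
  define \<phi> where "\<phi> x = (\<lambda>i. if i < n then x (h i, []) else (0::'k))" for x :: "('v,'e) qpath \<Rightarrow> 'k"
  have inj: "inj_on \<phi> A"
  proof (rule inj_onI)
    fix x y assume xA: "x \<in> A" and yA: "y \<in> A" and eq: "\<phi> x = \<phi> y"
    define d where "d = pa_add x (pa_smult (-1) y)"
    have dA: "d \<in> A" unfolding d_def using addA smA xA yA by blast
    have "\<forall>i<n. d (h i, []) = 0"
    proof (intro allI impI)
      fix i assume "i < n"
      then have "x (h i, []) = y (h i, [])" using fun_cong[OF eq, of i] by (simp add: \<phi>_def)
      then show "d (h i, []) = 0" by (simp add: d_def pa_add_def pa_smult_def)
    qed
    then have "d = (\<lambda>_. 0)" using kern dA by blast
    then show "x = y" by (auto simp: fun_eq_iff d_def pa_add_def pa_smult_def)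
  qed
  have surj: "\<exists>x\<in>A. \<forall>i<n. x (h i, []) = (if i < m then u i else 0)" for m and u :: "nat \<Rightarrow> 'k"
  proof (induct m)
    case 0
    then show ?case using zA by auto
  next
    case (Suc m)
    then obtain x where xA: "x \<in> A" and xv: "\<forall>i<n. x (h i, []) = (if i < m then u i else 0)"
      by blast
    show ?case
    proof (cases "m < n")
      case True
      obtain E where EA: "E \<in> A" and Ev: "\<forall>v. E (v,[]) = (if rel v (h m) then 1 else 0)"
        using indicator_ex[OF US, of "h m"] unfolding rel_def by blast
      have "rel (h i) (h m) \<longleftrightarrow> i = m" if "i < n" for i
        using dist[OF that True] by (auto simp: rel_def)
      note relm = this
      have inA: "pa_add x (pa_smult (u m) E) \<in> A" using addA smA xA EA by blast
      have "\<forall>i<n. pa_add x (pa_smult (u m) E) (h i, []) = (if i < Suc m then u i else 0)"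
      proof (intro allI impI)
        fix i assume i: "i < n"
        show "pa_add x (pa_smult (u m) E) (h i, []) = (if i < Suc m then u i else 0)"
          using xv[rule_format, OF i] Ev relm[OF i] by (cases "i = m") (auto simp: pa_add_def pa_smult_def)
      qed
      then show ?thesis using inA by blast
    next
      case False
      then show ?thesis using xA xv by auto
    qed
  qed
  have "iso_to_kn src tgt A n"
    unfolding iso_to_kn_def
  proof (intro exI[of _ \<phi>] conjI ballI allI)
    show "bij_betw \<phi> A {u. \<forall>i\<ge>n. u i = 0}"
      unfolding bij_betw_def
    proof (intro conjI inj equalityI subsetI)
      fix u assume "u \<in> \<phi> ` A"
      then show "u \<in> {u. \<forall>i\<ge>n. u i = 0}" by (auto simp: \<phi>_def)
    next
      fix u :: "nat \<Rightarrow> 'k" assume u: "u \<in> {u. \<forall>i\<ge>n. u i = 0}"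
      obtain x where xA: "x \<in> A" and xv: "\<forall>i<n. x (h i, []) = (if i < n then u i else 0)"
        using surj[of n u] by blast
      have "\<phi> x = u" using xv u by (auto simp: \<phi>_def fun_eq_iff)
      then show "u \<in> \<phi> ` A" using xA by blast
    qed
  next
    fix x y assume "x \<in> A" "y \<in> A"
    show "\<phi> (pa_add x y) = (\<lambda>i. \<phi> x i + \<phi> y i)" by (auto simp: \<phi>_def pa_add_def)
    show "\<phi> (pa_mult src tgt x y) = (\<lambda>i. \<phi> x i * \<phi> y i)" by (auto simp: \<phi>_def pm_triv)
  next
    fix c x assume "x \<in> A"
    show "\<phi> (pa_smult c x) = (\<lambda>i. c * \<phi> x i)" by (auto simp: \<phi>_def pa_smult_def)
  next
    show "\<phi> pa_one = (\<lambda>i. if i < n then 1 else 0)" by (auto simp: \<phi>_def pa_one_def)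
  qed
  then show ?thesis by blast
qed

end
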